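(* Let $S\subset\mathbb{C}^n$ be a polysector and let $f$ be holomorphic in $S$ and asymptotically bounded in $S$. If $f$ has null strong asymptotic expansion following a multidirection $\boldsymbol{\alpha}=(\alpha_1,\dots,\alpha_n)$ in $S$, i.e. for every $\boldsymbol{N}\in\mathbb{N}_0^n$ there is $c(\boldsymbol{N})>0$ with $|f(\boldsymbol{z})|\le c(\boldsymbol{N})|\boldsymbol{z}|^{\boldsymbol{N}}$ for all $\boldsymbol{z}\in S$ with $\arg\boldsymbol{z}=\boldsymbol{\alpha}$, then $f$ has null strong asymptotic expansion in $S$, i.e. for every $T\prec S$ and every $\boldsymbol{N}\in\mathbb{N}_0^n$ there exists $c>0$ with $|f(\boldsymbol{z})|\le c|\boldsymbol{z}|^{\boldsymbol{N}}$ for all $\boldsymbol{z}\in T$.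
   Context: A sector is $S(\alpha,\beta;\rho)=\{z:0<|z|<\rho,\ \arg z\in(\alpha,\beta)\}$, a polysector is a product $S=\prod_jS(\alpha_j,\beta_j;\rho_j)$, and a multidirection in $S$ is $\boldsymbol{\theta}$ with $\alpha_j<\theta_j<\beta_j$. $T=\prod T_j\prec S$ means each $T_j$ is a bounded sector with $\overline{T_j}\setminus\{0\}\subset S_j$. $f$ is asymptotically bounded in $S$ if bounded on every $T\prec S$. $|\boldsymbol{z}|^{\boldsymbol{N}}=\prod|z_j|^{N_j}$. *)

theory Defs
  imports "HOL-Analysis.Analysis"
begin

text \<open>Sector S(alpha,beta;rho) = {z. 0 < |z| < rho, arg z in (alpha,beta)};
  "arg z = t" is read as z = |z| e^{i t}.\<close>
definition sector :: "real \<Rightarrow> real \<Rightarrow> real \<Rightarrow> complex set" where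
  "sector \<alpha> \<beta> \<rho> = {z. 0 < norm z \<and> norm z < \<rho> \<and>
      (\<exists>t. \<alpha> < t \<and> t < \<beta> \<and> z = complex_of_real (norm z) * cis t)}"

definition polysector :: "real^'n \<Rightarrow> real^'n \<Rightarrow> real^'n \<Rightarrow> (complex^'n) set" where
  "polysector a b r = {z. \<forall>j. z $ j \<in> sector (a $ j) (b $ j) (r $ j)}"

definition psub :: "real^'n \<Rightarrow> real^'n \<Rightarrow> real^'n \<Rightarrow>
                    real^'n \<Rightarrow> real^'n \<Rightarrow> real^'n \<Rightarrow> bool" where
  "psub a' b' r' a b r \<longleftrightarrow>
     (\<forall>j. closure (sector (a' $ j) (b' $ j) (r' $ j)) - {0} \<subseteq> sector (a $ j) (b $ j) (r $ j))"

definition holomorphic_n :: "(complex^'n \<Rightarrow> complex) \<Rightarrow> (complex^'n) set \<Rightarrow> bool" where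
  "holomorphic_n f U \<longleftrightarrow> (\<forall>z\<in>U. \<exists>L. (f has_derivative L) (at z) \<and>
       (\<forall>c w. L (c *s w) = c * L w))"

definition asympt_bounded :: "(complex^'n \<Rightarrow> complex) \<Rightarrow> real^'n \<Rightarrow> real^'n \<Rightarrow> real^'n \<Rightarrow> bool" where
  "asympt_bounded f a b r \<longleftrightarrow>
     (\<forall>a' b' r'. psub a' b' r' a b r \<longrightarrow> bounded (f ` polysector a' b' r'))"

definition monpow :: "complex^'n \<Rightarrow> nat^'n \<Rightarrow> real" where
  "monpow z N = (\<Prod>j\<in>UNIV. norm (z $ j) ^ (N $ j))"

end

theory Submission
  imports Defs "HOL-Complex_Analysis.Complex_Analysis"
begin



lemma rect_bound:
  fixes G :: "complex \<Rightarrow> complex" and \<sigma> \<beta> M B \<kappa> \<mu> :: real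
  assumes sp: "\<sigma> > 0" and bp: "\<beta> > 0" and Mp: "M > 0" and Bp: "B > 0"
    and kap: "\<kappa> = pi / (2*\<sigma>)"
    and mu: "\<mu> = (exp (\<kappa>*\<beta>) - exp (-(\<kappa>*\<beta>))) / (exp (\<kappa>*(1+\<beta>)) - exp (-(\<kappa>*(1+\<beta>))))"
    and cont: "continuous_on (cbox (Complex (-\<sigma>) 0) (Complex \<sigma> (1+\<beta>))) G"
    and hol: "G holomorphic_on box (Complex (-\<sigma>) 0) (Complex \<sigma> (1+\<beta>))"
    and Mb: "\<And>z. z \<in> cbox (Complex (-\<sigma>) 0) (Complex \<sigma> (1+\<beta>)) \<Longrightarrow> norm (G z) \<le> M"
    and Bb: "\<And>s. -\<sigma> \<le> s \<Longrightarrow> s \<le> \<sigma> \<Longrightarrow> norm (G (complex_of_real s)) \<le> B"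
  shows "norm (G \<i>) \<le> M powr (1 - \<mu>) * B powr \<mu>"
proof -
  have kp: "\<kappa> > 0" using kap sp by simp
  have S1: "exp (\<kappa>*(1+\<beta>)) - exp (-(\<kappa>*(1+\<beta>))) > 0" using kp bp by simp
  have S2: "exp (\<kappa>*\<beta>) - exp (-(\<kappa>*\<beta>)) > 0" using kp bp by simp
  have S12: "exp (\<kappa>*\<beta>) - exp (-(\<kappa>*\<beta>)) < exp (\<kappa>*(1+\<beta>)) - exp (-(\<kappa>*(1+\<beta>)))"
    using kp bp by (smt (verit, best) distrib_left exp_less_cancel_iff mult_pos_pos)
  have mu0: "0 < \<mu>" "\<mu> < 1" using S1 S2 S12 mu by auto
  have iin: "\<i> \<in> cbox (Complex (-\<sigma>) 0) (Complex \<sigma> (1+\<beta>))"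
    using sp bp by (simp add: in_cbox_complex_iff)
  show ?thesis
  proof (cases "M \<le> B")
    case True
    have "norm (G \<i>) \<le> M" using Mb iin by blast
    also have "M = M powr (1-\<mu>) * M powr \<mu>" using Mp by (simp add: powr_add[symmetric])
    also have "\<dots> \<le> M powr (1-\<mu>) * B powr \<mu>"
      using True Mp mu0 by (intro mult_left_mono powr_mono2) auto
    finally show ?thesis .
  next
    case False
    define D where "D = ln M - ln B"
    have Dp: "D > 0" using False Bp Mp by (simp add: D_def)
    define S where "S = (exp (\<kappa>*(1+\<beta>)) - exp (-(\<kappa>*(1+\<beta>))))/2"
    define V where "V = (\<lambda>z. - \<i> * sin (of_real \<kappa> * (\<i> * of_real (1+\<beta>) - z)) / of_real S)"
    define H where "H = (\<lambda>z. G z * exp (of_real D * V z) / of_real M)"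
    have ReV: "Re (V z) = cos (\<kappa> * Re z) * (exp (\<kappa>*(1+\<beta> - Im z)) - exp (-(\<kappa>*(1+\<beta> - Im z)))) / 2 / S" for z
    proof -
      define w where "w = of_real \<kappa> * (\<i> * of_real (1+\<beta>) - z)"
      have "Re (V z) = Im (sin w) / S" by (simp add: V_def w_def)
      moreover have "Re w = - (\<kappa> * Re z)" "Im w = \<kappa>*(1+\<beta> - Im z)" by (simp_all add: w_def)
      ultimately show ?thesis by (simp add: Im_sin)
    qed
    have normH: "norm (H z) = norm (G z) * exp (D * Re (V z)) / M" for z
      using Mp by (simp add: H_def norm_mult norm_divide)
    have box_ne: "box (Complex (-\<sigma>) 0) (Complex \<sigma> (1+\<beta>)) \<noteq> {}"
      proof -
      have "\<i> \<in> box (Complex (-\<sigma>) 0) (Complex \<sigma> (1+\<beta>))" using sp bp by (simp add: in_box_complex_iff)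
      then show ?thesis by blast
    qed
    have "norm (H \<i>) \<le> 1"
    proof (rule maximum_modulus_frontier[where S = "box (Complex (-\<sigma>) 0) (Complex \<sigma> (1+\<beta>))" and f = H and B = 1])
      show "H holomorphic_on interior (box (Complex (- \<sigma>) 0) (Complex \<sigma> (1 + \<beta>)))"
      proof -
        have "H holomorphic_on box (Complex (- \<sigma>) 0) (Complex \<sigma> (1 + \<beta>))"
          unfolding H_def V_def using hol Mp S1 by (intro holomorphic_intros) (auto simp: S_def)
        then show ?thesis by (simp add: interior_open open_box)
      qed
      show "continuous_on (closure (box (Complex (- \<sigma>) 0) (Complex \<sigma> (1 + \<beta>)))) H"
      proof -
        have "continuous_on (cbox (Complex (- \<sigma>) 0) (Complex \<sigma> (1 + \<beta>))) H"
          unfolding H_def V_def using cont Mp S1 by (intro continuous_intros) (auto simp: S_def)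
        then show ?thesis using box_ne by simp
      qed
      show "bounded (box (Complex (- \<sigma>) 0) (Complex \<sigma> (1 + \<beta>)))" by (rule bounded_box)
      show "\<i> \<in> box (Complex (- \<sigma>) 0) (Complex \<sigma> (1 + \<beta>))"
        using sp bp by (simp add: in_box_complex_iff)
    next
      fix z assume "z \<in> frontier (box (Complex (- \<sigma>) 0) (Complex \<sigma> (1 + \<beta>)))"
      then have zc: "z \<in> cbox (Complex (- \<sigma>) 0) (Complex \<sigma> (1 + \<beta>))"
        and zb: "z \<notin> box (Complex (- \<sigma>) 0) (Complex \<sigma> (1 + \<beta>))"
        using box_ne by (auto simp: frontier_box)
      have r: "-\<sigma> \<le> Re z" "Re z \<le> \<sigma>" "0 \<le> Im z" "Im z \<le> 1+\<beta>" using zc by (auto simp: in_cbox_complex_iff)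
      have Gz: "norm (G z) \<le> M" using Mb zc by blast
      consider "Im z = 0" | "Im z = 1+\<beta>" | "Re z = \<sigma>" | "Re z = -\<sigma>"
        using zb r by (force simp: in_box_complex_iff)
      then show "norm (H z) \<le> 1"
      proof cases
        case 1
        then have zr: "z = of_real (Re z)" by (simp add: complex_eq_iff)
        have "norm (G z) \<le> B" using Bb[of "Re z"] r zr by metis
        moreover have "Re (V z) \<le> 1" using 1 ReV[of z] S1 by (simp add: S_def)
        ultimately have "norm (H z) \<le> B * exp D / M"
          unfolding normH using Mp Dp Bp by (intro divide_right_mono mult_mono) auto
        also have "B * exp D / M = 1" using Bp Mp by (simp add: D_def exp_diff)
        finally show ?thesis .
      next
        case 2
        then have "Re (V z) = 0" using ReV[of z] by simp
        then show ?thesis using Gz Mp unfolding normH by simp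
      next
        case 3
        have "cos (\<kappa> * Re z) = 0" using 3 kap sp by simp
        then have "Re (V z) = 0" using ReV[of z] by simp
        then show ?thesis using Gz Mp unfolding normH by simp
      next
        case 4
        have "cos (\<kappa> * Re z) = 0" using 4 kap sp by simp
        then have "Re (V z) = 0" using ReV[of z] by simp
        then show ?thesis using Gz Mp unfolding normH by simp
      qed
    qed
    moreover have "Re (V \<i>) = \<mu>"
    proof -
      have "Re (V \<i>) = (exp (\<kappa>*\<beta>) - exp (-(\<kappa>*\<beta>))) / 2 / S" using ReV[of \<i>] by simp
      also have "\<dots> = \<mu>"
      proof -
        have e: "\<And>x y::real. x / 2 / (y / 2) = x / y" by simp
        show ?thesis unfolding mu S_def by (rule e)
      qed
      finally show ?thesis .
    qed
    ultimately have "norm (G \<i>) * exp (D * \<mu>) \<le> M" using Mp unfolding normH by (simp add: field_simps)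
    then have "norm (G \<i>) \<le> M * exp (- (D * \<mu>))" using Mp by (simp add: exp_minus field_simps)
    also have "M * exp (- (D * \<mu>)) = M powr (1 - \<mu>) * B powr \<mu>"
    proof -
      have "M powr (1 - \<mu>) * B powr \<mu> = exp (ln M + (\<mu> * ln B - \<mu> * ln M))"
        using Mp Bp by (simp add: powr_def exp_add[symmetric] algebra_simps)
      also have "\<dots> = M * exp (\<mu> * ln B - \<mu> * ln M)" using Mp by (simp only: exp_add exp_ln)
      also have "\<mu> * ln B - \<mu> * ln M = - (D * \<mu>)" by (simp add: D_def algebra_simps)
      finally show ?thesis by simp
    qed
    finally show ?thesis .
  qed
qed



lemma cis_eq_imp: assumes "cis t = cis u" shows "\<exists>k::int. t = u + 2*pi*k"
proof -
  have "cis (t - u) = 1" using assms by (simp add: cis_divide[symmetric])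
  then have "exp (\<i> * complex_of_real (t - u)) = 1" by (simp add: cis_conv_exp)
  then obtain n::int where "t - u = of_int (2*n) * pi" by (auto simp: exp_eq_1)
  then show ?thesis by (intro exI[of _ n]) (simp add: algebra_simps)
qed

lemma cis_period: "cis (t + 2*pi* of_int k) = cis t"
proof -
  have "cis (2*pi* of_int k) = 1" by (rule cis_multiple_2pi) simp
  then show ?thesis by (simp add: cis_mult[symmetric])
qed

lemma shift_into: fixes p lo t :: real assumes "0 < p" shows "\<exists>k::int. lo \<le> t + p*k \<and> t + p*k \<le> lo + p"
proof -
  define k where "k = \<lceil>(lo - t)/p\<rceil>"
  have "(lo - t)/p \<le> k" "k < (lo - t)/p + 1" unfolding k_def by linarith+
  then have "lo - t \<le> p*k" "p*k < lo - t + p" using assms by (auto simp: field_simps)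
  then show ?thesis by (intro exI[of _ k]) auto
qed

lemma sector_geom:
  assumes ab: "a < \<theta>" "\<theta> < b"
    and cl: "closure (sector a' b' r') - {0} \<subseteq> sector a b r"
    and ne: "sector a' b' r' \<noteq> {}"
  shows "r' < r \<and> 0 < r' \<and> (\<exists>lo hi. a < lo \<and> lo \<le> \<theta> \<and> \<theta> \<le> hi \<and> hi < b \<and>
      (\<forall>z\<in>sector a' b' r'. \<exists>t. lo \<le> t \<and> t \<le> hi \<and> z = complex_of_real (norm z) * cis t))"
proof -
  obtain z0 t0 where z0: "0 < norm z0" "norm z0 < r'" "a' < t0" "t0 < b'" "z0 = of_real (norm z0) * cis t0"
    using ne unfolding sector_def by auto
  have r'p: "0 < r'" using z0(1,2) by linarith
  have a'b': "a' < b'" using z0 by auto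
  have sub1: "(\<lambda>x. complex_of_real x * cis t0) ` {0<..<r'} \<subseteq> sector a' b' r'"
    using z0 by (auto simp: sector_def norm_mult)
  have "(\<lambda>x. complex_of_real x * cis t0) ` closure {0<..<r'} \<subseteq> closure (sector a' b' r')"
    by (rule image_closure_subset[OF _ closed_closure]) (use sub1 closure_subset in \<open>auto intro!: continuous_intros\<close>)
  then have "complex_of_real r' * cis t0 \<in> closure (sector a' b' r')" using r'p by auto
  then have "complex_of_real r' * cis t0 \<in> sector a b r" using cl r'p by auto
  then have rr: "r' < r" by (auto simp: sector_def norm_mult)
  have sub2: "(\<lambda>x. complex_of_real (r'/2) * cis x) ` {a'<..<b'} \<subseteq> sector a' b' r'"
    using r'p by (auto simp: sector_def norm_mult)
  have "(\<lambda>x. complex_of_real (r'/2) * cis x) ` closure {a'<..<b'} \<subseteq> closure (sector a' b' r')"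
    by (rule image_closure_subset[OF _ closed_closure]) (use sub2 closure_subset in \<open>auto intro!: continuous_intros\<close>)
  then have cl2: "complex_of_real (r'/2) * cis t \<in> sector a b r" if "a' \<le> t" "t \<le> b'" for t
  proof -
    have "(\<lambda>x. complex_of_real (r'/2) * cis x) t \<in> (\<lambda>x. complex_of_real (r'/2) * cis x) ` closure {a'<..<b'}"
      using a'b' that by (intro imageI) simp
    then have "complex_of_real (r'/2) * cis t \<in> closure (sector a' b' r')"
      using \<open>(\<lambda>x. complex_of_real (r'/2) * cis x) ` closure {a'<..<b'} \<subseteq> closure (sector a' b' r')\<close> by (meson subsetD)
    moreover have "complex_of_real (r'/2) * cis t \<noteq> 0" using r'p by simp
    ultimately show ?thesis using cl by blast
  qed
  have key: "\<exists>u k. a < u \<and> u < b \<and> t = u + 2*pi* of_int k" if h: "a' \<le> t" "t \<le> b'" for t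
  proof -
    obtain u where u: "a < u" "u < b" "complex_of_real (r'/2) * cis t = of_real (norm (complex_of_real (r'/2) * cis t)) * cis u"
      using cl2[OF h] unfolding sector_def by blast
    then have "cis t = cis u" using r'p by (simp add: norm_mult)
    then obtain k::int where "t = u + 2*pi*k" using cis_eq_imp by blast
    then show ?thesis using u by blast
  qed
  have "\<exists>lo hi. a < lo \<and> lo \<le> \<theta> \<and> \<theta> \<le> hi \<and> hi < b \<and>
      (\<forall>z\<in>sector a' b' r'. \<exists>t. lo \<le> t \<and> t \<le> hi \<and> z = complex_of_real (norm z) * cis t)"
  proof (cases "b - a \<le> 2*pi")
    case True
    obtain u k where uk: "a < u" "u < b" "a' = u + 2*pi* of_int k" using key[of a'] a'b' by auto
    have hb: "b' - 2*pi*k < b"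
    proof (rule ccontr)
      assume "\<not> ?thesis"
      then have "a' \<le> b + 2*pi*k" "b + 2*pi*k \<le> b'" using uk by auto
      then obtain u' m where um: "a < u'" "u' < b" "b + 2*pi*k = u' + 2*pi* of_int m" using key by blast
      have "2*pi*(of_int m - of_int k) < 2*pi" using um True by (simp add: algebra_simps)
      then have "of_int m - of_int k < (1::real)" by simp
      then have mk: "m \<le> k" by linarith
      have "2*pi*(of_int k - of_int m) = u' - b" using um by (simp add: algebra_simps)
      then have "2*pi*(of_int k - of_int m) < 0" using um by simp
      then have "of_int k - of_int m < (0::real)" by (simp add: mult_less_0_iff)
      then have "k < m" by linarith
      with mk show False by simp
    qed
    show ?thesis
    proof (rule exI[of _ "min (a' - 2*pi*k) \<theta>"], rule exI[of _ "max (b' - 2*pi*k) \<theta>"], intro conjI ballI)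
      show "a < min (a' - 2*pi*k) \<theta>" using uk ab by simp
      show "min (a' - 2*pi*k) \<theta> \<le> \<theta>" by simp
      show "\<theta> \<le> max (b' - 2*pi*k) \<theta>" by simp
      show "max (b' - 2*pi*k) \<theta> < b" using hb ab by simp
    next
      fix z assume "z \<in> sector a' b' r'"
      then obtain t where t: "a' < t" "t < b'" "z = complex_of_real (norm z) * cis t" unfolding sector_def by auto
      have "cis (t - 2*pi*k) = cis t" using cis_period[of "t - 2*pi*k" k] by simp
      then show "\<exists>t. min (a' - 2*pi*k) \<theta> \<le> t \<and> t \<le> max (b' - 2*pi*k) \<theta> \<and> z = complex_of_real (norm z) * cis t"
        using t by (intro exI[of _ "t - 2*pi*k"]) auto
    qed
  next
    case False
    define d where "d = b - a - 2*pi"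
    have dp: "d > 0" using False by (simp add: d_def)
    define lo where "lo = min \<theta> (max (\<theta> - 2*pi) (a + d/2))"
    have lo: "a < lo" "lo \<le> \<theta>" "\<theta> \<le> lo + 2*pi" "lo + 2*pi < b"
      using ab dp pi_gt_zero unfolding lo_def d_def by (auto simp: min_def max_def field_simps)
    show ?thesis
    proof (rule exI[of _ lo], rule exI[of _ "lo + 2*pi"], intro conjI ballI)
      show "a < lo" "lo \<le> \<theta>" "\<theta> \<le> lo + 2*pi" "lo + 2*pi < b" by (rule lo)+
    next
      fix z assume "z \<in> sector a' b' r'"
      then obtain t where t: "z = complex_of_real (norm z) * cis t" unfolding sector_def by auto
      obtain k::int where k: "lo \<le> t + 2*pi*k" "t + 2*pi*k \<le> lo + 2*pi"
        using shift_into[of "2*pi" lo t] by auto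
      show "\<exists>t. lo \<le> t \<and> t \<le> lo + 2*pi \<and> z = complex_of_real (norm z) * cis t"
        using k t cis_period[of t k] by (intro exI[of _ "t + 2*pi*k"]) auto
    qed
  qed
  then show ?thesis using rr r'p by blast
qed



lemma sector_closure_sub:
  assumes "a < a2" "b2 < b" "r2 < r"
  shows "closure (sector a2 b2 r2) - {0} \<subseteq> sector a b r"
proof -
  define K where "K = (\<lambda>p. complex_of_real (fst p) * cis (snd p)) ` ({0..r2} \<times> {a2..b2})"
  have "compact K" unfolding K_def
    by (intro compact_continuous_image compact_Times compact_Icc) (auto intro!: continuous_intros)
  then have cK: "closed K" by (rule compact_imp_closed)
  have "sector a2 b2 r2 \<subseteq> K"
  proof
    fix z assume "z \<in> sector a2 b2 r2"
    then obtain t where t: "0 < norm z" "norm z < r2" "a2 < t" "t < b2" "z = complex_of_real (norm z) * cis t"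
      unfolding sector_def by auto
    then have "(norm z, t) \<in> {0..r2} \<times> {a2..b2}" by auto
    then show "z \<in> K" unfolding K_def using t(5) by (metis (no_types, lifting) fst_conv image_eqI snd_conv)
  qed
  then have "closure (sector a2 b2 r2) \<subseteq> K" using cK by (rule closure_minimal)
  moreover have "K - {0} \<subseteq> sector a b r"
  proof
    fix w assume "w \<in> K - {0}"
    then obtain x t where xt: "0 \<le> x" "x \<le> r2" "a2 \<le> t" "t \<le> b2" "w = complex_of_real x * cis t" "w \<noteq> 0"
      unfolding K_def by auto
    then have "x \<noteq> 0" by auto
    then have nw: "norm w = x" using xt by (simp add: norm_mult)
    show "w \<in> sector a b r" unfolding sector_def using xt nw assms \<open>x \<noteq> 0\<close>
      by (auto intro!: exI[of _ t])
  qed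
  ultimately show ?thesis by blast
qed


lemma vec_has_derivative:
  fixes g :: "'n::finite \<Rightarrow> complex \<Rightarrow> complex"
  assumes "\<And>j. (g j has_field_derivative g' j) (at x)"
  shows "((\<lambda>x. \<chi> j. g j x) has_derivative (\<lambda>h. h *s (\<chi> j. g' j))) (at x)"
proof (subst has_derivative_componentwise_within, intro ballI)
  fix i :: "complex^'n" assume "i \<in> Basis"
  then obtain j u where iu: "i = axis j u" "u \<in> Basis" by (auto simp: Basis_vec_def)
  have "((\<lambda>x. g j x \<bullet> u) has_derivative (\<lambda>h. (h * g' j) \<bullet> u)) (at x)"
  proof -
    have e: "(\<lambda>h. h * g' j) = (*) (g' j)" by (auto simp: fun_eq_iff mult.commute)
    show ?thesis using assms[of j] unfolding has_field_derivative_def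
      by (intro bounded_linear.has_derivative[OF bounded_linear_inner_left]) (simp add: e)
  qed
  then show "((\<lambda>x. (\<chi> j. g j x) \<bullet> i) has_derivative (\<lambda>h. (h *s (\<chi> j. g' j)) \<bullet> i)) (at x)"
    using iu by (simp add: inner_axis mult.commute)
qed

lemma holo_comp_field_diff:
  fixes f :: "complex^'n \<Rightarrow> complex" and g :: "'n \<Rightarrow> complex \<Rightarrow> complex"
  assumes hol: "holomorphic_n f U" and inU: "(\<chi> j. g j x) \<in> U"
    and der: "\<And>j. (g j has_field_derivative g' j) (at x)"
  shows "(\<lambda>x. f (\<chi> j. g j x)) field_differentiable (at x)"
proof -
  obtain L where L: "(f has_derivative L) (at (\<chi> j. g j x))" and lin: "\<And>c w. L (c *s w) = c * L w"
    using hol inU unfolding holomorphic_n_def by blast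
  have "((f \<circ> (\<lambda>x. \<chi> j. g j x)) has_derivative (L \<circ> (\<lambda>h. h *s (\<chi> j. g' j)))) (at x)"
    by (rule diff_chain_at[OF vec_has_derivative[OF der] L])
  moreover have "L \<circ> (\<lambda>h. h *s (\<chi> j. g' j)) = (*) (L (\<chi> j. g' j))"
    by (auto simp: fun_eq_iff lin mult.commute)
  ultimately have "((\<lambda>x. f (\<chi> j. g j x)) has_field_derivative (L (\<chi> j. g' j))) (at x)"
    by (simp add: has_field_derivative_def o_def)
  then show ?thesis unfolding field_differentiable_def by blast
qed



lemma sector_mono: assumes "a \<le> a2" "b2 \<le> b" "r3 \<le> r" shows "sector a2 b2 r3 \<subseteq> sector a b r"
proof
  fix z assume "z \<in> sector a2 b2 r3"
  then obtain t where "0 < norm z" "norm z < r3" "a2 < t" "t < b2" "z = complex_of_real (norm z) * cis t"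
    unfolding sector_def by auto
  then show "z \<in> sector a b r" unfolding sector_def using assms
    by (intro CollectI conjI exI[of _ t]) auto
qed

lemma angle_bound:
  fixes m \<phi> \<beta> w \<theta> \<psi> lo hi :: real
  assumes "0 \<le> \<phi>" "\<phi> \<le> 1+\<beta>" "\<beta> > 0" "\<bar>m\<bar> \<le> w" "m = \<psi> - \<theta>" "lo \<le> \<psi>" "\<psi> \<le> hi" "lo \<le> \<theta>" "\<theta> \<le> hi"
  shows "lo - \<beta>*w \<le> \<theta> + m*\<phi> \<and> \<theta> + m*\<phi> \<le> hi + \<beta>*w"
proof (cases "m \<ge> 0")
  case True
  have "m*\<phi> \<le> m*(1+\<beta>)" using True assms by (intro mult_left_mono) auto
  then have 1: "m*\<phi> \<le> m + m*\<beta>" by (simp add: distrib_left)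
  have 2: "m*\<beta> \<le> \<beta>*w" using True assms by (subst mult.commute, intro mult_left_mono) auto
  have 3: "0 \<le> m*\<phi>" using True assms by simp
  have 4: "0 \<le> \<beta>*w" using assms by simp
  show ?thesis using 1 2 3 4 assms(5-9) by linarith
next
  case False
  have "m*(1+\<beta>) \<le> m*\<phi>" using False assms by (intro mult_left_mono_neg) auto
  then have 1: "m + m*\<beta> \<le> m*\<phi>" by (simp add: distrib_left)
  have "\<beta>*(-m) \<le> \<beta>*w" using False assms by (intro mult_left_mono) auto
  then have 2: "-(\<beta>*w) \<le> m*\<beta>" by (simp add: mult.commute)
  have 3: "m*\<phi> \<le> 0" using False assms by (simp add: mult_nonpos_nonneg)
  have 4: "0 \<le> \<beta>*w" using assms by simp
  show ?thesis using 1 2 3 4 assms(5-9) by linarith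
qed

lemma ms_bound:
  fixes m s \<sigma> w :: real
  assumes "\<bar>s\<bar> \<le> \<sigma>" "\<bar>m\<bar> \<le> w"
  shows "m * s \<le> \<sigma> * w"
proof -
  have "m * s \<le> \<bar>m\<bar> * \<bar>s\<bar>" by (simp add: abs_mult[symmetric])
  also have "\<dots> \<le> w * \<sigma>" using assms by (intro mult_mono) auto
  finally show ?thesis by (simp add: mult.commute)
qed

lemma norm_ofreal_cis: "0 \<le> x \<Longrightarrow> norm (complex_of_real x * cis t) = x"
  by (simp add: norm_mult)

theorem proposition5p5:
  fixes f :: "complex^'n \<Rightarrow> complex" and a b r \<theta> :: "real^'n"
  assumes ab: "\<forall>j. a $ j < b $ j" and rpos: "\<forall>j. 0 < r $ j"
    and hol: "holomorphic_n f (polysector a b r)"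
    and abdd: "asympt_bounded f a b r"
    and dir: "\<forall>j. a $ j < \<theta> $ j \<and> \<theta> $ j < b $ j"
    and null_dir: "\<forall>N::nat^'n. \<exists>c>0. \<forall>z\<in>polysector a b r.
                      (\<forall>j. z $ j = complex_of_real (norm (z $ j)) * cis (\<theta> $ j)) \<longrightarrow>
                      norm (f z) \<le> c * monpow z N"
  shows "\<forall>a' b' r'. psub a' b' r' a b r \<longrightarrow>
           (\<forall>N::nat^'n. \<exists>c>0. \<forall>z\<in>polysector a' b' r'. norm (f z) \<le> c * monpow z N)"
proof (intro allI impI)
  fix a' b' r' :: "real^'n" and N' :: "nat^'n"
  assume ps: "psub a' b' r' a b r"
  show "\<exists>c>0. \<forall>z\<in>polysector a' b' r'. norm (f z) \<le> c * monpow z N'"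
  proof (cases "polysector a' b' r' = {}")
    case True then show ?thesis by (intro exI[of _ 1]) auto
  next
    case False
    then obtain z0 where z0: "z0 \<in> polysector a' b' r'" by blast
    have ne: "sector (a'$j) (b'$j) (r'$j) \<noteq> {}" for j using z0 unfolding polysector_def by auto
    have geo: "r'$j < r$j \<and> 0 < r'$j \<and> (\<exists>lo hi. a$j < lo \<and> lo \<le> \<theta>$j \<and> \<theta>$j \<le> hi \<and> hi < b$j \<and>
       (\<forall>z\<in>sector (a'$j) (b'$j) (r'$j). \<exists>t. lo \<le> t \<and> t \<le> hi \<and> z = complex_of_real (norm z) * cis t))" for j
      by (rule sector_geom) (use dir ps ne in \<open>auto simp: psub_def\<close>)
    have r'r: "r'$j < r$j" and r'p: "0 < r'$j" for j using geo by auto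
    obtain LO HI where LH: "\<And>j. a$j < LO j \<and> LO j \<le> \<theta>$j \<and> \<theta>$j \<le> HI j \<and> HI j < b$j \<and>
       (\<forall>z\<in>sector (a'$j) (b'$j) (r'$j). \<exists>t. LO j \<le> t \<and> t \<le> HI j \<and> z = complex_of_real (norm z) * cis t)"
      using geo by metis
    define w where "w j = HI j - LO j" for j
    define \<delta> where "\<delta> j = min (LO j - a$j) (b$j - HI j)" for j
    have \<delta>p: "\<delta> j > 0" for j using LH[of j] by (simp add: \<delta>_def)
    have wn: "w j \<ge> 0" for j using LH[of j] by (simp add: w_def)
    have evb: "\<forall>\<^sub>F x in at_right (0::real). \<forall>j. x * w j < \<delta> j / 2"
    proof (intro eventually_all_finite)
      fix j
      have "((\<lambda>x. x * w j) \<longlongrightarrow> 0 * w j) (at_right (0::real))"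
        by (intro tendsto_intros)
      then have "((\<lambda>x. x * w j) \<longlongrightarrow> 0) (at_right (0::real))" by simp
      then show "\<forall>\<^sub>F x in at_right 0. x * w j < \<delta> j / 2" using \<delta>p[of j] by (intro order_tendstoD(2)) auto
    qed
    then obtain b0 where b0: "b0 > 0" "\<And>y. 0 < y \<Longrightarrow> y < b0 \<Longrightarrow> \<forall>j. y * w j < \<delta> j / 2"
      unfolding eventually_at_right_field by auto
    define \<beta> where "\<beta> = b0 / 2"
    have \<beta>p: "\<beta> > 0" using b0 by (auto simp: \<beta>_def)
    have \<beta>w: "\<And>j. \<beta> * w j < \<delta> j / 2" using b0(2)[of \<beta>] b0(1) by (auto simp: \<beta>_def)
    define r2 where "r2 j = (r'$j + r$j) / 2" for j
    have evs: "\<forall>\<^sub>F x in at_right (0::real). \<forall>j. r'$j * exp (x * w j) < r2 j"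
    proof (intro eventually_all_finite)
      fix j
      have "((\<lambda>x. r'$j * exp (x * w j)) \<longlongrightarrow> r'$j * exp (0 * w j)) (at_right (0::real))"
        by (intro tendsto_intros)
      then show "\<forall>\<^sub>F x in at_right 0. r'$j * exp (x * w j) < r2 j" using r'r[of j]
        by (intro order_tendstoD(2)) (auto simp: r2_def)
    qed
    then obtain s0 where s0: "s0 > 0" "\<And>y. 0 < y \<Longrightarrow> y < s0 \<Longrightarrow> \<forall>j. r'$j * exp (y * w j) < r2 j"
      unfolding eventually_at_right_field by auto
    define \<sigma> where "\<sigma> = s0 / 2"
    have \<sigma>p: "\<sigma> > 0" using s0 by (auto simp: \<sigma>_def)
    have \<sigma>w: "\<And>j. r'$j * exp (\<sigma> * w j) < r2 j" using s0(2)[of \<sigma>] s0(1) by (auto simp: \<sigma>_def)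
    define a2 where "a2 = (\<chi> j. LO j - \<delta> j * 3/4)"
    define b2 where "b2 = (\<chi> j. HI j + \<delta> j * 3/4)"
    define r3 where "r3 = (\<chi> j. (r2 j + r$j) / 2)"
    have \<delta>le: "\<delta> j \<le> LO j - a$j" "\<delta> j \<le> b$j - HI j" for j by (auto simp: \<delta>_def)
    have a2a: "a$j < a2$j" and b2b: "b2$j < b$j" and r3r: "r3$j < r$j" for j
      using \<delta>p[of j] r'r[of j] \<delta>le[of j] unfolding a2_def b2_def r3_def r2_def by auto
    have "psub a2 b2 r3 a b r" unfolding psub_def
      using sector_closure_sub[OF a2a b2b r3r] by blast
    then have "bounded (f ` polysector a2 b2 r3)" using abdd unfolding asympt_bounded_def by blast
    then obtain M where Mp: "M > 0" and Mb: "\<And>z. z \<in> polysector a2 b2 r3 \<Longrightarrow> norm (f z) \<le> M"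
      unfolding bounded_pos by auto
    have sub_ab: "polysector a2 b2 r3 \<subseteq> polysector a b r"
    proof
      fix z assume "z \<in> polysector a2 b2 r3"
      then have "z$j \<in> sector (a2$j) (b2$j) (r3$j)" for j unfolding polysector_def by auto
      moreover have "sector (a2$j) (b2$j) (r3$j) \<subseteq> sector (a$j) (b$j) (r$j)" for j
        using a2a[of j] b2b[of j] r3r[of j] by (intro sector_mono) auto
      ultimately show "z \<in> polysector a b r" unfolding polysector_def by blast
    qed
    define \<kappa> where "\<kappa> = pi / (2*\<sigma>)"
    define \<mu> where "\<mu> = (exp (\<kappa>*\<beta>) - exp (-(\<kappa>*\<beta>))) / (exp (\<kappa>*(1+\<beta>)) - exp (-(\<kappa>*(1+\<beta>))))"
    have kp: "\<kappa> > 0" using \<sigma>p by (simp add: \<kappa>_def)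
    have S1: "exp (\<kappa>*(1+\<beta>)) - exp (-(\<kappa>*(1+\<beta>))) > 0" using kp \<beta>p by simp
    have S2: "exp (\<kappa>*\<beta>) - exp (-(\<kappa>*\<beta>)) > 0" using kp \<beta>p by simp
    have \<mu>p: "\<mu> > 0" using S1 S2 by (simp add: \<mu>_def)
    define k where "k = nat \<lceil>1/\<mu>\<rceil>"
    have k1: "1 \<le> real k * \<mu>"
    proof -
      have "1/\<mu> \<le> real k" unfolding k_def by linarith
      then show ?thesis using \<mu>p by (simp add: field_simps)
    qed
    define N where "N = (\<chi> j. k * N'$j :: nat^'n)"
    obtain cN where cNp: "cN > 0" and cN: "\<And>z. z\<in>polysector a b r \<Longrightarrow>
        (\<forall>j. z $ j = complex_of_real (norm (z $ j)) * cis (\<theta> $ j)) \<Longrightarrow> norm (f z) \<le> cN * monpow z N"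
      using null_dir by blast
    define E where "E = (\<Prod>j\<in>UNIV. exp (\<sigma> * w j) ^ (N$j))"
    define Pmax where "Pmax = (\<Prod>j\<in>UNIV. (r'$j) ^ (N'$j))"
    have Ep: "E > 0" unfolding E_def by (intro prod_pos) auto
    have Pp: "Pmax > 0" unfolding Pmax_def using r'p by (intro prod_pos) auto
    define C where "C = M powr (1-\<mu>) * (cN*E) powr \<mu> * Pmax powr (real k*\<mu> - 1)"
    show ?thesis
    proof (intro exI[of _ C] conjI ballI)
      show "C > 0" unfolding C_def using Mp cNp Ep Pp by simp
    next
      fix z assume z: "z \<in> polysector a' b' r'"
      have zs: "z$j \<in> sector (a'$j) (b'$j) (r'$j)" for j using z unfolding polysector_def by auto
      define \<rho> where "\<rho> j = norm (z$j)" for j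
      have \<rho>p: "0 < \<rho> j" and \<rho>r: "\<rho> j < r'$j" for j using zs[of j] unfolding sector_def \<rho>_def by auto
      have "\<forall>j. \<exists>t. LO j \<le> t \<and> t \<le> HI j \<and> z$j = complex_of_real (\<rho> j) * cis t"
      proof
        fix j show "\<exists>t. LO j \<le> t \<and> t \<le> HI j \<and> z$j = complex_of_real (\<rho> j) * cis t"
          using LH[of j] zs[of j] unfolding \<rho>_def by blast
      qed
      then have "\<exists>\<psi>. \<forall>j. LO j \<le> \<psi> j \<and> \<psi> j \<le> HI j \<and> z$j = complex_of_real (\<rho> j) * cis (\<psi> j)"
        by (rule choice)
      then obtain \<psi> where \<psi>: "\<And>j. LO j \<le> \<psi> j \<and> \<psi> j \<le> HI j \<and> z$j = complex_of_real (\<rho> j) * cis (\<psi> j)"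
        by blast
      define m where "m j = \<psi> j - \<theta>$j" for j
      have mw: "\<bar>m j\<bar> \<le> w j" for j using \<psi>[of j] LH[of j] unfolding m_def w_def by auto
      define g where "g j \<zeta> = complex_of_real (\<rho> j) * cis (\<theta>$j) * exp (complex_of_real (m j) * \<zeta>)" for j \<zeta>
      define Z where "Z \<zeta> = (\<chi> j. g j \<zeta>)" for \<zeta>
      have Zc: "Z (Complex s \<phi>) $ j = complex_of_real (\<rho> j * exp (m j * s)) * cis (\<theta>$j + m j * \<phi>)" for s \<phi> j
      proof -
        have "complex_of_real (m j) * Complex s \<phi> = complex_of_real (m j * s) + \<i> * complex_of_real (m j * \<phi>)"
          by (simp add: complex_eq_iff)
        then have "exp (complex_of_real (m j) * Complex s \<phi>) = exp (complex_of_real (m j * s)) * exp (\<i> * complex_of_real (m j * \<phi>))"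
          by (simp only: exp_add)
        also have "\<dots> = complex_of_real (exp (m j * s)) * cis (m j * \<phi>)"
          by (simp only: cis_conv_exp exp_of_real)
        finally have "exp (complex_of_real (m j) * Complex s \<phi>) = complex_of_real (exp (m j * s)) * cis (m j * \<phi>)" .
        then show ?thesis by (simp add: Z_def g_def cis_mult[symmetric] mult_ac)
      qed
      have Zin: "Z \<zeta> \<in> polysector a2 b2 r3" if "\<zeta> \<in> cbox (Complex (-\<sigma>) 0) (Complex \<sigma> (1+\<beta>))" for \<zeta>
      proof -
        obtain s \<phi> where sp: "\<zeta> = Complex s \<phi>" by (cases \<zeta>)
        have sb: "\<bar>s\<bar> \<le> \<sigma>" "0 \<le> \<phi>" "\<phi> \<le> 1+\<beta>" using that sp by (auto simp: in_cbox_complex_iff)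
        have "Z \<zeta> $ j \<in> sector (a2$j) (b2$j) (r3$j)" for j
        proof -
          define x where "x = \<rho> j * exp (m j * s)"
          have xp: "0 < x" using \<rho>p[of j] by (simp add: x_def)
          have "exp (m j * s) \<le> exp (\<sigma> * w j)" using ms_bound[OF sb(1) mw[of j]] by simp
          then have "x \<le> r'$j * exp (\<sigma> * w j)" unfolding x_def using \<rho>p[of j] \<rho>r[of j]
            by (intro mult_mono) auto
          then have "x < r2 j" using \<sigma>w[of j] by linarith
          moreover have "r2 j < r3$j" using r'r[of j] unfolding r3_def r2_def by simp
          ultimately have xr: "x < r3$j" by linarith
          have ang: "LO j - \<beta>*w j \<le> \<theta>$j + m j*\<phi> \<and> \<theta>$j + m j*\<phi> \<le> HI j + \<beta>*w j"
            by (rule angle_bound[OF sb(2,3) \<beta>p mw[of j]]) (use \<psi>[of j] LH[of j] in \<open>auto simp: m_def\<close>)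
          have "a2$j < \<theta>$j + m j*\<phi>" "\<theta>$j + m j*\<phi> < b2$j"
            using ang \<beta>w[of j] \<delta>p[of j] by (auto simp: a2_def b2_def)
          moreover have "Z \<zeta> $ j = complex_of_real x * cis (\<theta>$j + m j * \<phi>)" using Zc sp by (simp add: x_def)
          ultimately show ?thesis unfolding sector_def using xp xr norm_ofreal_cis[of x]
            by (intro CollectI conjI exI[of _ "\<theta>$j + m j * \<phi>"]) auto
        qed
        then show ?thesis unfolding polysector_def by auto
      qed
      let ?Q = "cbox (Complex (-\<sigma>) 0) (Complex \<sigma> (1+\<beta>))"
      have Zab: "Z \<zeta> \<in> polysector a b r" if "\<zeta> \<in> ?Q" for \<zeta> using Zin[OF that] sub_ab by blast
      have der: "(g j has_field_derivative (complex_of_real (\<rho> j) * cis (\<theta>$j) * (exp (complex_of_real (m j) * \<zeta>) * complex_of_real (m j)))) (at \<zeta>)" for j \<zeta>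
        unfolding g_def by (auto intro!: derivative_eq_intros)
      have fd: "(\<lambda>x. f (Z x)) field_differentiable (at \<zeta>)" if "\<zeta> \<in> ?Q" for \<zeta>
        unfolding Z_def by (rule holo_comp_field_diff[OF hol _ der]) (use Zab[OF that] in \<open>simp add: Z_def\<close>)
      have cont: "continuous_on ?Q (\<lambda>x. f (Z x))"
        by (intro continuous_at_imp_continuous_on ballI field_differentiable_imp_continuous_at fd)
      have holo: "(\<lambda>x. f (Z x)) holomorphic_on box (Complex (-\<sigma>) 0) (Complex \<sigma> (1+\<beta>))"
        unfolding holomorphic_on_def using fd box_subset_cbox field_differentiable_at_within by blast
      have Xp: "monpow z N' > 0" unfolding monpow_def using \<rho>p by (intro prod_pos) (auto simp: \<rho>_def)
      have XP: "monpow z N' \<le> Pmax" unfolding monpow_def Pmax_def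
        using \<rho>p \<rho>r by (intro prod_mono conjI power_mono) (auto simp: \<rho>_def less_imp_le)
      have mz: "monpow z N = (monpow z N') ^ k"
      proof -
        have "(\<Prod>j\<in>UNIV. norm (z$j) ^ (N'$j)) ^ k = (\<Prod>j\<in>UNIV. (norm (z$j) ^ (N'$j)) ^ k)"
          by (rule prod_power_distrib)
        also have "\<dots> = (\<Prod>j\<in>UNIV. norm (z$j) ^ (k * N'$j))"
          by (simp add: power_mult[symmetric] mult.commute)
        finally show ?thesis unfolding monpow_def N_def by simp
      qed
      define B where "B = cN * E * monpow z N"
      have Bp: "B > 0" unfolding B_def mz using cNp Ep Xp by simp
      have bottom: "norm (f (Z (complex_of_real s))) \<le> B" if "-\<sigma> \<le> s" "s \<le> \<sigma>" for s
      proof -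
        have cs: "complex_of_real s = Complex s 0" by (simp add: complex_eq_iff)
        have inbox: "complex_of_real s \<in> ?Q" using that \<beta>p by (simp add: in_cbox_complex_iff)
        have Zs: "Z (complex_of_real s) $ j = complex_of_real (\<rho> j * exp (m j * s)) * cis (\<theta>$j)" for j
          using Zc[of s 0 j] cs by simp
        have nZs: "norm (Z (complex_of_real s) $ j) = \<rho> j * exp (m j * s)" for j
          using Zs[of j] \<rho>p[of j] by (simp add: norm_mult)
        have ray: "\<forall>j. Z (complex_of_real s) $ j = complex_of_real (norm (Z (complex_of_real s) $ j)) * cis (\<theta>$j)"
          using Zs nZs by simp
        have "norm (f (Z (complex_of_real s))) \<le> cN * monpow (Z (complex_of_real s)) N"
          by (rule cN[OF Zab[OF inbox] ray])
        also have "monpow (Z (complex_of_real s)) N \<le> monpow z N * E"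
        proof -
          have "monpow (Z (complex_of_real s)) N = (\<Prod>j\<in>UNIV. (\<rho> j * exp (m j * s)) ^ (N$j))"
            unfolding monpow_def using nZs by simp
          also have "\<dots> \<le> (\<Prod>j\<in>UNIV. (\<rho> j) ^ (N$j) * exp (\<sigma> * w j) ^ (N$j))"
          proof (intro prod_mono conjI)
            fix j
            have "exp (m j * s) \<le> exp (\<sigma> * w j)" using ms_bound[of s \<sigma> "m j" "w j"] that mw[of j] by simp
            then have "\<rho> j * exp (m j * s) \<le> \<rho> j * exp (\<sigma> * w j)" using \<rho>p[of j] by simp
            then have "(\<rho> j * exp (m j * s)) ^ (N$j) \<le> (\<rho> j * exp (\<sigma> * w j)) ^ (N$j)"
              using \<rho>p[of j] by (intro power_mono) auto
            then show "(\<rho> j * exp (m j * s)) ^ (N$j) \<le> (\<rho> j) ^ (N$j) * exp (\<sigma> * w j) ^ (N$j)"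
              by (simp add: power_mult_distrib)
            show "0 \<le> (\<rho> j * exp (m j * s)) ^ (N$j)" using \<rho>p[of j] by simp
          qed
          also have "\<dots> = monpow z N * E" unfolding monpow_def E_def \<rho>_def by (simp add: prod.distrib)
          finally show ?thesis .
        qed
        then have "cN * monpow (Z (complex_of_real s)) N \<le> cN * (monpow z N * E)" using cNp by simp
        finally show ?thesis by (simp add: B_def mult_ac)
      qed
      have Mb': "norm (f (Z \<zeta>)) \<le> M" if "\<zeta> \<in> ?Q" for \<zeta> using Mb Zin[OF that] by blast
      have main: "norm (f (Z \<i>)) \<le> M powr (1 - \<mu>) * B powr \<mu>"
        by (rule rect_bound[of \<sigma> \<beta> M B \<kappa> \<mu> "\<lambda>x. f (Z x)", OF \<sigma>p \<beta>p Mp Bp \<kappa>_def \<mu>_def cont holo Mb' bottom])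
      have Zi: "Z \<i> = z"
      proof (subst vec_eq_iff, intro allI)
        fix j
        have "\<i> = Complex 0 1" by (simp add: complex_eq_iff)
        then have "Z \<i> $ j = complex_of_real (\<rho> j) * cis (\<theta>$j + m j)" using Zc[of 0 1 j] by simp
        also have "\<dots> = z$j" using \<psi>[of j] by (simp add: m_def)
        finally show "Z \<i> $ j = z$j" .
      qed
      have "norm (f z) \<le> M powr (1 - \<mu>) * B powr \<mu>" using main Zi by simp
      also have "B powr \<mu> = (cN*E) powr \<mu> * (monpow z N' powr (real k * \<mu>))"
        unfolding B_def mz using cNp Ep Xp
        by (simp add: powr_mult powr_realpow[symmetric] powr_powr)
      also have "monpow z N' powr (real k * \<mu>) = monpow z N' * monpow z N' powr (real k * \<mu> - 1)"
      proof -
        have "monpow z N' powr (real k * \<mu>) = monpow z N' powr (1 + (real k * \<mu> - 1))" by simp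
        also have "\<dots> = monpow z N' powr 1 * monpow z N' powr (real k * \<mu> - 1)" by (rule powr_add)
        finally show ?thesis using Xp by simp
      qed
      also have "monpow z N' powr (real k * \<mu> - 1) \<le> Pmax powr (real k * \<mu> - 1)"
        using Xp XP k1 by (intro powr_mono2) auto
      finally show "norm (f z) \<le> C * monpow z N'"
        using Mp cNp Ep Xp by (simp add: C_def mult_left_mono mult_ac)
    qed
  qed
qed


end
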